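(* Assume the Cartan matrix $\mathbf C$ is symmetric, and let $i\in I'$. Then we can write $\Lambda_0-\delta+\alpha_i=w(i)\Lambda_0$ for a unique $\Lambda_0$-minuscule element $w(i)\in W$.
   Context: $\mathbf C=(c_{ij})_{i,j\in I}$ is a Cartan matrix of untwisted affine type, $I=\{0,1,\dots,l\}$, $0$ the affine vertex, $I'=I\setminus\{0\}$; $(\mathfrak h,\Pi,\Pi^\vee)$ a realization with simple roots $\alpha_i$, coroots $\alpha_i^\vee$, pairing $\langle\cdot,\cdot\rangle$, $\delta$ the null root. $\Lambda_i$ ($i\in I$) are the fundamental weights, $\langle\Lambda_i,\alpha_j^\vee\rangle=\delta_{ij}$, and $P=\bigoplus\mathbb Z\Lambda_i$. $W$ is the affine Weyl group generated by $r_i$, acting by $r_i(\lambda)=\lambda-\langle\lambda,\alpha_i^\vee\rangle\alpha_i$. For $\Lambda\in P$, $w\in W$ is $\Lambda$-minuscule if it has a reduced expression $w=r_{i_l}\cdots r_{i_1}$ with $\langle r_{i_{k-1}}\cdots r_{i_1}\Lambda,\alpha_{i_k}^\vee\rangle=1$ for all $1\le k\le l$. *)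

theory Defs
  imports Complex_Main
begin

text \<open>Cartan matrices are functions nat => nat => int, relevant on indices 0..l
  (I = {0..l}, I' = {1..l}, 0 = affine vertex).  Matrix convention (Kac):
  c_ij = <alpha_i^vee, alpha_j>.\<close>

type_synonym cmat = "nat \<Rightarrow> nat \<Rightarrow> int"

definition gcm :: "cmat \<Rightarrow> nat set \<Rightarrow> bool" where
  "gcm C J \<longleftrightarrow> (\<forall>i\<in>J. C i i = 2) \<and>
     (\<forall>i\<in>J. \<forall>j\<in>J. i \<noteq> j \<longrightarrow> C i j \<le> 0) \<and>
     (\<forall>i\<in>J. \<forall>j\<in>J. C i j = 0 \<longleftrightarrow> C j i = 0)"

definition indecomposable :: "cmat \<Rightarrow> nat set \<Rightarrow> bool" where
  "indecomposable C J \<longleftrightarrow> \<not> (\<exists>A B. A \<noteq> {} \<and> B \<noteq> {} \<and> A \<inter> B = {} \<and> A \<union> B = J \<and>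
       (\<forall>a\<in>A. \<forall>b\<in>B. C a b = 0))"

definition mvec :: "cmat \<Rightarrow> nat set \<Rightarrow> (nat \<Rightarrow> real) \<Rightarrow> nat \<Rightarrow> real" where
  "mvec C J v i = (\<Sum>k\<in>J. real_of_int (C i k) * v k)"

definition finite_type :: "cmat \<Rightarrow> nat set \<Rightarrow> bool" where
  "finite_type C J \<longleftrightarrow>
     (\<forall>v. (\<forall>i\<in>J. mvec C J v i = 0) \<longrightarrow> (\<forall>i\<in>J. v i = 0)) \<and>
     (\<exists>u. (\<forall>i\<in>J. u i > 0) \<and> (\<forall>i\<in>J. mvec C J u i > 0)) \<and>
     (\<forall>v. (\<forall>i\<in>J. mvec C J v i \<ge> 0) \<longrightarrow> (\<forall>i\<in>J. v i > 0) \<or> (\<forall>i\<in>J. v i = 0))"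

definition affine_type :: "cmat \<Rightarrow> nat set \<Rightarrow> bool" where
  "affine_type C J \<longleftrightarrow>
     (\<exists>u. (\<exists>i\<in>J. u i \<noteq> 0) \<and> (\<forall>i\<in>J. mvec C J u i = 0) \<and>
          (\<forall>v. (\<forall>i\<in>J. mvec C J v i = 0) \<longrightarrow> (\<exists>c. \<forall>i\<in>J. v i = c * u i))) \<and>
     (\<exists>u. (\<forall>i\<in>J. u i > 0) \<and> (\<forall>i\<in>J. mvec C J u i = 0)) \<and>
     (\<forall>v. (\<forall>i\<in>J. mvec C J v i \<ge> 0) \<longrightarrow> (\<forall>i\<in>J. mvec C J v i = 0))"

text \<open>Finite root system of the finite Cartan matrix C restricted to J,
  in coordinates w.r.t. the simple roots; simple reflections on roots and on coroots.\<close>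
definition fin_refl :: "cmat \<Rightarrow> nat set \<Rightarrow> nat \<Rightarrow> (nat \<Rightarrow> int) \<Rightarrow> nat \<Rightarrow> int" where
  "fin_refl C J j v = v(j := v j - (\<Sum>k\<in>J. C j k * v k))"

definition fin_corefl :: "cmat \<Rightarrow> nat set \<Rightarrow> nat \<Rightarrow> (nat \<Rightarrow> int) \<Rightarrow> nat \<Rightarrow> int" where
  "fin_corefl C J j u = u(j := u j - (\<Sum>k\<in>J. u k * C k j))"

definition unitv :: "nat \<Rightarrow> nat \<Rightarrow> int" where
  "unitv m = (\<lambda>k. if k = m then 1 else 0)"

definition fin_roots :: "cmat \<Rightarrow> nat set \<Rightarrow> (nat \<Rightarrow> int) set" where
  "fin_roots C J = {fold (fin_refl C J) ws (unitv m) | ws m. set ws \<subseteq> J \<and> m \<in> J}"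

text \<open>Untwisted affine type with affine vertex 0 (Kac, Table Aff 1): the restriction to
  I' = {1..l} is an indecomposable finite type Cartan matrix and C is its extended Cartan
  matrix, i.e. alpha_0 = delta - theta with theta the highest root:
  c_j0 = -<alpha_j^vee, theta>, c_0j = -<theta^vee, alpha_j>, c_00 = 2.\<close>
definition untwisted_affine :: "cmat \<Rightarrow> nat \<Rightarrow> bool" where
  "untwisted_affine C l \<longleftrightarrow> l \<ge> 1 \<and> gcm C {0..l} \<and> affine_type C {0..l} \<and>
     indecomposable C {0..l} \<and> finite_type C {1..l} \<and> indecomposable C {1..l} \<and>
     (\<exists>ws m. set ws \<subseteq> {1..l} \<and> m \<in> {1..l} \<and>
        (let \<theta> = fold (fin_refl C {1..l}) ws (unitv m);
             \<theta>v = fold (fin_corefl C {1..l}) ws (unitv m) in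
          (\<forall>\<beta>\<in>fin_roots C {1..l}. \<forall>j\<in>{1..l}. \<beta> j \<le> \<theta> j) \<and>
          C 0 0 = 2 \<and>
          (\<forall>j\<in>{1..l}. C j 0 = - (\<Sum>k\<in>{1..l}. C j k * \<theta> k)) \<and>
          (\<forall>j\<in>{1..l}. C 0 j = - (\<Sum>k\<in>{1..l}. \<theta>v k * C k j))))"

text \<open>Realization: h* has basis alpha_0, ..., alpha_l, Lambda_0 (Kac 6.2), with
  <alpha_j, alpha_i^vee> = c_ij and <Lambda_0, alpha_i^vee> = delta_{i0}.\<close>
datatype wbasis = Alpha nat | Lam0

type_synonym weight = "wbasis \<Rightarrow> int"

definition alpha :: "nat \<Rightarrow> weight" where
  "alpha j = (\<lambda>b. if b = Alpha j then 1 else 0)"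

definition Lambda0 :: weight where
  "Lambda0 = (\<lambda>b. if b = Lam0 then 1 else 0)"

definition null_coeffs :: "cmat \<Rightarrow> nat \<Rightarrow> nat \<Rightarrow> int" where
  "null_coeffs C l = (THE a. (\<forall>j\<le>l. a j > 0) \<and> (\<forall>j>l. a j = 0) \<and>
      (\<forall>i\<le>l. (\<Sum>j\<le>l. C i j * a j) = 0) \<and> Gcd (a ` {..l}) = 1)"

definition delta :: "cmat \<Rightarrow> nat \<Rightarrow> weight" where
  "delta C l = (\<lambda>b. case b of Alpha j \<Rightarrow> null_coeffs C l j | Lam0 \<Rightarrow> 0)"

definition pair :: "cmat \<Rightarrow> nat \<Rightarrow> weight \<Rightarrow> nat \<Rightarrow> int" where
  "pair C l \<mu> i = (\<Sum>j\<le>l. C i j * \<mu> (Alpha j)) + (if i = 0 then \<mu> Lam0 else 0)"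

definition refl :: "cmat \<Rightarrow> nat \<Rightarrow> nat \<Rightarrow> weight \<Rightarrow> weight" where
  "refl C l i \<mu> = (\<lambda>b. \<mu> b - pair C l \<mu> i * alpha i b)"

text \<open>word [i_1, ..., i_n] denotes r_{i_n} ... r_{i_1} (i_1 applied first)\<close>
definition word_act :: "cmat \<Rightarrow> nat \<Rightarrow> nat list \<Rightarrow> weight \<Rightarrow> weight" where
  "word_act C l ws = fold (refl C l) ws"

definition weyl_group :: "cmat \<Rightarrow> nat \<Rightarrow> (weight \<Rightarrow> weight) set" where
  "weyl_group C l = {word_act C l ws | ws. set ws \<subseteq> {0..l}}"

definition reduced_word :: "cmat \<Rightarrow> nat \<Rightarrow> nat list \<Rightarrow> bool" where
  "reduced_word C l ws \<longleftrightarrow> set ws \<subseteq> {0..l} \<and>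
     (\<forall>vs. set vs \<subseteq> {0..l} \<and> word_act C l vs = word_act C l ws \<longrightarrow> length ws \<le> length vs)"

definition minuscule :: "cmat \<Rightarrow> nat \<Rightarrow> weight \<Rightarrow> (weight \<Rightarrow> weight) \<Rightarrow> bool" where
  "minuscule C l \<Lambda> w \<longleftrightarrow> (\<exists>ws. reduced_word C l ws \<and> w = word_act C l ws \<and>
     (\<forall>k<length ws. pair C l (word_act C l (take k ws) \<Lambda>) (ws ! k) = 1))"

end

theory Submission
  imports Defs
begin

fun adj :: "nat list \<Rightarrow> bool" where
  "adj (a # b # r) = (a \<noteq> b \<and> adj (b # r))"
| "adj _ = True"

lemma not_adj: "\<not> adj x \<Longrightarrow> \<exists>p a r. x = p @ a # a # r"
proof (induction x rule: adj.induct)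
  case (1 a b r)
  show ?case
  proof (cases "a = b")
    case True then show ?thesis by (metis append_Nil)
  next
    case False
    then have "\<not> adj (b # r)" using 1(2) by simp
    then obtain p c q where "b # r = p @ c # c # q" using 1(1) False by blast
    then have "a # b # r = (a # p) @ c # c # q" by simp
    then show ?thesis by blast
  qed
qed auto

fun altL :: "nat \<Rightarrow> nat \<Rightarrow> nat \<Rightarrow> nat list" where
  "altL a b 0 = []"
| "altL a b (Suc n) = a # altL b a n"

lemma adj_alt: "set x \<subseteq> {a, b} \<Longrightarrow> adj x \<Longrightarrow> (x \<noteq> [] \<longrightarrow> hd x = a) \<Longrightarrow> x = altL a b (length x)"
proof (induction x arbitrary: a b)
  case Nil then show ?case by simp
next
  case (Cons c r)
  then have c: "c = a" by simp
  show ?case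
  proof (cases r)
    case Nil then show ?thesis using c by simp
  next
    case (Cons d r')
    then have "d \<noteq> a" using Cons.prems c by simp
    then have "d = b" using Cons.prems \<open>r = d # r'\<close> by auto
    have "r = altL b a (length r)"
      using Cons.IH[of b a] Cons.prems \<open>r = d # r'\<close> \<open>d = b\<close> by auto
    then show ?thesis using c by simp
  qed
qed

lemma set_altL: "set (altL a b n) \<subseteq> {a, b}"
  by (induction n arbitrary: a b) auto

lemma length_altL: "length (altL a b n) = n"
  by (induction n arbitrary: a b) auto

locale sgcm =
  fixes C :: cmat and l :: nat
  assumes diag: "\<And>i. i \<le> l \<Longrightarrow> C i i = 2"
    and offd: "\<And>i j. i \<le> l \<Longrightarrow> j \<le> l \<Longrightarrow> i \<noteq> j \<Longrightarrow> C i j \<le> 0"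
    and symm: "\<And>i j. i \<le> l \<Longrightarrow> j \<le> l \<Longrightarrow> C i j = C j i"
begin

lemma pair_comb: "pair C l (\<lambda>b. x * \<mu> b + y * \<nu> b) i = x * pair C l \<mu> i + y * pair C l \<nu> i"
  unfolding pair_def by (simp add: sum.distrib sum_distrib_left algebra_simps)

lemma refl_comb: "refl C l i (\<lambda>b. x * \<mu> b + y * \<nu> b) = (\<lambda>b. x * refl C l i \<mu> b + y * refl C l i \<nu> b)"
  unfolding refl_def by (simp add: pair_comb algebra_simps fun_eq_iff)

lemma wa_Cons: "word_act C l (a # ws) \<mu> = word_act C l ws (refl C l a \<mu>)"
  by (simp add: word_act_def)
lemma wa_Nil: "word_act C l [] = id" by (simp add: word_act_def)
lemma wa_append: "word_act C l (xs @ ys) = word_act C l ys \<circ> word_act C l xs"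
  by (simp add: word_act_def)
lemma wa_snoc: "word_act C l (xs @ [a]) \<mu> = refl C l a (word_act C l xs \<mu>)"
  by (simp add: word_act_def)

lemma wa_comb: "word_act C l ws (\<lambda>b. x * \<mu> b + y * \<nu> b) = (\<lambda>b. x * word_act C l ws \<mu> b + y * word_act C l ws \<nu> b)"
  by (induction ws arbitrary: \<mu> \<nu>) (simp_all add: wa_Cons wa_Nil refl_comb)

lemma pair_alpha: "j \<le> l \<Longrightarrow> pair C l (alpha j) i = C i j"
  unfolding pair_def alpha_def by (simp add: if_distrib cong: if_cong)

lemma pair_Lambda0: "pair C l Lambda0 i = (if i = 0 then 1 else 0)"
  unfolding pair_def Lambda0_def by simp

lemma pair_refl: assumes "j \<le> l" shows "pair C l (refl C l j \<mu>) i = pair C l \<mu> i - pair C l \<mu> j * C i j"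
proof -
  have h: "refl C l j \<mu> = (\<lambda>b. 1 * \<mu> b + (- pair C l \<mu> j) * alpha j b)"
    unfolding refl_def by (simp add: fun_eq_iff)
  show ?thesis using assms by (simp only: h pair_comb pair_alpha)
qed

lemma refl_invol: "j \<le> l \<Longrightarrow> refl C l j (refl C l j \<mu>) = \<mu>"
  using pair_refl[of j \<mu> j] diag[of j] unfolding refl_def[of C l j "refl C l j \<mu>"]
  by (simp add: refl_def fun_eq_iff algebra_simps)

lemma refl_invol': "j \<le> l \<Longrightarrow> refl C l j \<circ> refl C l j = id"
  by (simp add: fun_eq_iff refl_invol)

lemma refl_alpha_self: "j \<le> l \<Longrightarrow> refl C l j (alpha j) = (\<lambda>b. - alpha j b)"
  using diag[of j] by (simp add: refl_def pair_alpha fun_eq_iff)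

lemma wa_rev_cancel: "set ws \<subseteq> {0..l} \<Longrightarrow> word_act C l (rev ws) (word_act C l ws \<mu>) = \<mu>"
proof (induction ws arbitrary: \<mu>)
  case Nil then show ?case by (simp add: wa_Nil)
next
  case (Cons a ws)
  have "word_act C l (rev (a # ws)) (word_act C l (a # ws) \<mu>) =
        refl C l a (word_act C l (rev ws) (word_act C l ws (refl C l a \<mu>)))"
    by (simp add: wa_Cons wa_snoc)
  also have "\<dots> = \<mu>" using Cons by (simp add: refl_invol)
  finally show ?case .
qed

lemma wa_cancel_rev: "set ws \<subseteq> {0..l} \<Longrightarrow> word_act C l ws (word_act C l (rev ws) \<mu>) = \<mu>"
  using wa_rev_cancel[of "rev ws"] by simp

lemma wa_inj: "set ws \<subseteq> {0..l} \<Longrightarrow> word_act C l ws x = word_act C l ws y \<Longrightarrow> x = y"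
  by (metis wa_rev_cancel)

lemma wa_rev_eq: assumes "set ws \<subseteq> {0..l}" "set vs \<subseteq> {0..l}" "word_act C l vs = word_act C l ws"
  shows "word_act C l (rev vs) = word_act C l (rev ws)"
proof
  fix \<mu>
  have "word_act C l vs (word_act C l (rev ws) \<mu>) = \<mu>"
    using assms(1) wa_cancel_rev assms(3) by metis
  then have "word_act C l (rev vs) \<mu> = word_act C l (rev vs) (word_act C l vs (word_act C l (rev ws) \<mu>))"
    by simp
  also have "\<dots> = word_act C l (rev ws) \<mu>" using assms(2) by (simp add: wa_rev_cancel)
  finally show "word_act C l (rev vs) \<mu> = word_act C l (rev ws) \<mu>" .
qed

lemma sum_ind: "j \<le> l \<Longrightarrow> (\<Sum>k\<le>l. (if k = j then (1::int) else 0) * f k) = f j"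
  by (simp add: if_distrib[of "\<lambda>x. x * _"] sum.delta cong: if_cong)

lemma sum_ind': "j \<le> l \<Longrightarrow> (\<Sum>k\<le>l. f k * (if k = j then (1::int) else 0)) = f j"
  using sum_ind[of j f] by (simp add: mult.commute)

definition BB :: "weight \<Rightarrow> weight \<Rightarrow> int" where
  "BB \<mu> \<gamma> = (\<Sum>k\<le>l. \<gamma> (Alpha k) * pair C l \<mu> k) + \<gamma> Lam0 * \<mu> (Alpha 0)"

lemma BB_alpha: "j \<le> l \<Longrightarrow> BB \<mu> (alpha j) = pair C l \<mu> j"
  unfolding BB_def alpha_def using sum_ind[of j "pair C l \<mu>"] by simp

lemma BB_Lambda0: "BB Lambda0 \<gamma> = \<gamma> (Alpha 0)"
proof -
  have "(\<Sum>k\<le>l. \<gamma> (Alpha k) * pair C l Lambda0 k) = \<gamma> (Alpha 0)"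
    using sum_ind'[of 0 "\<lambda>k. \<gamma> (Alpha k)"] by (simp add: pair_Lambda0)
  then show ?thesis unfolding BB_def by (simp add: Lambda0_def)
qed

lemma BB_refl: assumes "i \<le> l" shows "BB (refl C l i \<mu>) \<nu> = BB \<mu> (refl C l i \<nu>)"
proof -
  define p where "p = pair C l \<mu> i"
  define q where "q = pair C l \<nu> i"
  have q: "q = (\<Sum>k\<le>l. \<nu> (Alpha k) * C k i) + (if i = 0 then \<nu> Lam0 else 0)"
    unfolding q_def pair_def
    by (simp add: sum.cong[OF refl, of _ "\<lambda>k. C i k * \<nu> (Alpha k)" "\<lambda>k. \<nu> (Alpha k) * C k i"] symm assms mult.commute)
  have "BB (refl C l i \<mu>) \<nu> = (\<Sum>k\<le>l. \<nu> (Alpha k) * (pair C l \<mu> k - p * C k i)) + \<nu> Lam0 * (\<mu> (Alpha 0) - p * alpha i (Alpha 0))"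
    unfolding BB_def by (simp only: pair_refl[OF assms]) (simp add: p_def refl_def)
  also have "\<dots> = BB \<mu> \<nu> - p * ((\<Sum>k\<le>l. \<nu> (Alpha k) * C k i) + \<nu> Lam0 * alpha i (Alpha 0))"
    unfolding BB_def by (simp add: algebra_simps sum_subtractf sum_distrib_left)
  also have "\<dots> = BB \<mu> \<nu> - p * q" unfolding q by (simp add: alpha_def)
  finally have 1: "BB (refl C l i \<mu>) \<nu> = BB \<mu> \<nu> - p * q" .
  have "BB \<mu> (refl C l i \<nu>) = (\<Sum>k\<le>l. (\<nu> (Alpha k) - q * (if k = i then 1 else 0)) * pair C l \<mu> k) + \<nu> Lam0 * \<mu> (Alpha 0)"
    unfolding BB_def by (simp add: refl_def q_def alpha_def)
  also have "\<dots> = BB \<mu> \<nu> - q * (\<Sum>k\<le>l. (if k = i then 1 else 0) * pair C l \<mu> k)"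
    unfolding BB_def by (simp add: algebra_simps sum_subtractf sum_distrib_left)
  also have "\<dots> = BB \<mu> \<nu> - q * p" using sum_ind[OF assms, of "pair C l \<mu>"] p_def by simp
  finally show ?thesis using 1 by simp
qed

lemma BB_wa: "set ws \<subseteq> {0..l} \<Longrightarrow> BB (word_act C l ws \<mu>) \<nu> = BB \<mu> (word_act C l (rev ws) \<nu>)"
proof (induction ws arbitrary: \<nu> rule: rev_induct)
  case Nil then show ?case by (simp add: wa_Nil)
next
  case (snoc a ws)
  then show ?case by (simp add: wa_snoc BB_refl wa_Cons)
qed

lemma pair_transfer: "set ws \<subseteq> {0..l} \<Longrightarrow> j \<le> l \<Longrightarrow>
   pair C l (word_act C l ws Lambda0) j = word_act C l (rev ws) (alpha j) (Alpha 0)"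
  by (metis BB_alpha BB_wa BB_Lambda0)

lemma refl_apply: "refl C l j \<mu> b = \<mu> b - pair C l \<mu> j * alpha j b"
  by (simp add: refl_def)

definition len :: "(weight \<Rightarrow> weight) \<Rightarrow> nat" where
  "len w = (LEAST n. \<exists>ws. set ws \<subseteq> {0..l} \<and> length ws = n \<and> word_act C l ws = w)"

lemma len_le: "set ws \<subseteq> {0..l} \<Longrightarrow> len (word_act C l ws) \<le> length ws"
  unfolding len_def by (rule Least_le) blast

lemma len_ex: "set ws \<subseteq> {0..l} \<Longrightarrow> \<exists>vs. set vs \<subseteq> {0..l} \<and> length vs = len (word_act C l ws) \<and> word_act C l vs = word_act C l ws"
  unfolding len_def by (rule LeastI_ex) blast

lemma len_rev: assumes "set ws \<subseteq> {0..l}" shows "len (word_act C l (rev ws)) = len (word_act C l ws)"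
proof -
  have *: "len (word_act C l (rev ws)) \<le> len (word_act C l ws)" if hws: "set ws \<subseteq> {0..l}" for ws
  proof -
    obtain vs where vs: "set vs \<subseteq> {0..l}" "length vs = len (word_act C l ws)" "word_act C l vs = word_act C l ws"
      using len_ex[OF hws] by blast
    have "word_act C l (rev vs) = word_act C l (rev ws)" using wa_rev_eq[OF hws vs(1) vs(3)] .
    then show ?thesis using len_le[of "rev vs"] vs by simp
  qed
  show ?thesis using *[OF assms] *[of "rev ws"] assms by fastforce
qed

lemma len_sub: assumes "set a \<subseteq> {0..l}" "set b \<subseteq> {0..l}"
  shows "len (word_act C l (a @ b)) \<le> len (word_act C l a) + len (word_act C l b)"
proof -
  obtain a' where a': "set a' \<subseteq> {0..l}" "length a' = len (word_act C l a)" "word_act C l a' = word_act C l a"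
    using len_ex[OF assms(1)] by blast
  obtain b' where b': "set b' \<subseteq> {0..l}" "length b' = len (word_act C l b)" "word_act C l b' = word_act C l b"
    using len_ex[OF assms(2)] by blast
  have "word_act C l (a' @ b') = word_act C l (a @ b)" using a' b' by (simp add: wa_append)
  then show ?thesis using len_le[of "a' @ b'"] a' b' by simp
qed

lemma wa_cancel2: "t \<le> l \<Longrightarrow> word_act C l (p @ t # t # q) = word_act C l (p @ q)"
  by (simp add: wa_append wa_Cons fun_eq_iff refl_invol)

lemma wa_Cons_fun: "word_act C l (a # ws) = word_act C l ws \<circ> refl C l a"
  by (simp add: fun_eq_iff wa_Cons)

definition nonneg :: "weight \<Rightarrow> bool" where
  "nonneg \<gamma> \<longleftrightarrow> (\<forall>b. 0 \<le> \<gamma> b)"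


definition comb :: "nat \<Rightarrow> nat \<Rightarrow> int \<Rightarrow> int \<Rightarrow> weight" where
  "comb s s' p q = (\<lambda>z. p * alpha s z + q * alpha s' z)"

lemma pair_comb2: assumes "s \<le> l" "s' \<le> l"
  shows "pair C l (comb s s' p q) j = C j s * p + C j s' * q"
  unfolding comb_def using assms by (simp add: pair_comb pair_alpha mult.commute)

lemma refl_comb_s: assumes "s \<le> l" "s' \<le> l" "s \<noteq> s'"
  shows "refl C l s (comb s s' p q) = comb s s' (- p - C s s' * q) q"
proof -
  have h: "pair C l (comb s s' p q) s = 2*p + C s s' * q" using assms diag[of s] by (simp add: pair_comb2)
  show ?thesis unfolding refl_def h using assms by (auto simp: comb_def alpha_def fun_eq_iff algebra_simps)
qed

lemma refl_comb_s': assumes "s \<le> l" "s' \<le> l" "s \<noteq> s'"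
  shows "refl C l s' (comb s s' p q) = comb s s' p (- C s s' * p - q)"
proof -
  have h: "pair C l (comb s s' p q) s' = C s s' * p + 2 * q" using assms diag[of s'] symm[of s s'] by (simp add: pair_comb2)
  show ?thesis unfolding refl_def h using assms by (auto simp: comb_def alpha_def fun_eq_iff algebra_simps)
qed

lemma alpha_comb: "alpha s = comb s s' 1 0"
  by (simp add: comb_def fun_eq_iff)

lemma alt_pos:
  assumes "s \<le> l" "s' \<le> l" "s \<noteq> s'" "C s s' \<le> -2"
  shows "(0 \<le> q \<and> q \<le> p \<longrightarrow> (\<exists>p' q'. 0 \<le> p' \<and> 0 \<le> q' \<and> word_act C l (altL s' s n) (comb s s' p q) = comb s s' p' q')) \<and>
         (0 \<le> p \<and> p \<le> q \<longrightarrow> (\<exists>p' q'. 0 \<le> p' \<and> 0 \<le> q' \<and> word_act C l (altL s s' n) (comb s s' p q) = comb s s' p' q'))"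
proof (induction n arbitrary: p q)
  case 0 
  show ?case by (intro conjI impI; rule exI[of _ p], rule exI[of _ q]) (auto simp: wa_Nil)
next
  case (Suc n)
  show ?case
  proof (intro conjI impI)
    assume h: "0 \<le> q \<and> q \<le> p"
    define X where "X = - C s s' * p - q"
    have eq: "word_act C l (altL s' s (Suc n)) (comb s s' p q) = word_act C l (altL s s' n) (comb s s' p X)"
      using assms by (simp add: wa_Cons refl_comb_s' X_def)
    have bd: "0 \<le> p \<and> p \<le> X"
    proof -
      have "2 * p \<le> - C s s' * p" using h assms(4) by (intro mult_right_mono) auto
      then show ?thesis using h X_def by auto
    qed
    have ih: "0 \<le> p \<and> p \<le> X \<longrightarrow> (\<exists>p' q'. 0 \<le> p' \<and> 0 \<le> q' \<and> word_act C l (altL s s' n) (comb s s' p X) = comb s s' p' q')"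
      using conjunct2[OF Suc.IH[where p=p and q=X]] .
    from mp[OF ih bd] obtain p' q' where "0 \<le> p'" "0 \<le> q'" "word_act C l (altL s s' n) (comb s s' p X) = comb s s' p' q'"
      by blast
    then show "\<exists>p' q'. 0 \<le> p' \<and> 0 \<le> q' \<and> word_act C l (altL s' s (Suc n)) (comb s s' p q) = comb s s' p' q'"
      unfolding eq by blast
  next
    assume h: "0 \<le> p \<and> p \<le> q"
    define X where "X = - p - C s s' * q"
    have eq: "word_act C l (altL s s' (Suc n)) (comb s s' p q) = word_act C l (altL s' s n) (comb s s' X q)"
      using assms by (simp add: wa_Cons refl_comb_s X_def)
    have bd: "0 \<le> q \<and> q \<le> X"
    proof -
      have "2 * q \<le> - C s s' * q" using h assms(4) by (intro mult_right_mono) auto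
      then show ?thesis using h X_def by auto
    qed
    have ih: "0 \<le> q \<and> q \<le> X \<longrightarrow> (\<exists>p' q'. 0 \<le> p' \<and> 0 \<le> q' \<and> word_act C l (altL s' s n) (comb s s' X q) = comb s s' p' q')"
      using conjunct1[OF Suc.IH[where p=X and q=q]] .
    from mp[OF ih bd] obtain p' q' where "0 \<le> p'" "0 \<le> q'" "word_act C l (altL s' s n) (comb s s' X q) = comb s s' p' q'"
      by blast
    then show "\<exists>p' q'. 0 \<le> p' \<and> 0 \<le> q' \<and> word_act C l (altL s s' (Suc n)) (comb s s' p q) = comb s s' p' q'"
      unfolding eq by blast
  qed
qed

lemma commute_refl: assumes "s \<le> l" "s' \<le> l" "C s s' = 0"
  shows "refl C l s (refl C l s' \<mu>) = refl C l s' (refl C l s \<mu>)"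
  using assms symm[of s s'] by (simp add: fun_eq_iff refl_apply pair_refl algebra_simps)

lemma braid_refl: assumes "s \<le> l" "s' \<le> l" "C s s' = -1"
  shows "refl C l s (refl C l s' (refl C l s \<mu>)) = refl C l s' (refl C l s (refl C l s' \<mu>))"
  using assms symm[of s s'] diag[of s] diag[of s'] by (simp add: fun_eq_iff refl_apply pair_refl algebra_simps)


lemma dihedral:
  assumes "s \<le> l" "s' \<le> l" "s \<noteq> s'" "set x \<subseteq> {s, s'}"
    and M1: "\<And>y. set y \<subseteq> {s,s'} \<Longrightarrow> word_act C l y = word_act C l x \<Longrightarrow> length x \<le> length y"
    and M2: "\<And>y. set y \<subseteq> {s,s'} \<Longrightarrow> word_act C l y = word_act C l (s # x) \<Longrightarrow> length x \<le> length y"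
  shows "\<exists>p q. 0 \<le> p \<and> 0 \<le> q \<and> word_act C l x (alpha s) = comb s s' p q"
proof -
  have adj: "adj x"
  proof (rule ccontr)
    assume "\<not> adj x" then obtain p a r where x: "x = p @ a # a # r" using not_adj by blast
    have "a \<le> l" using assms(1,2,4) x by auto
    then have "word_act C l (p @ r) = word_act C l x" using x wa_cancel2 by simp
    moreover have "set (p @ r) \<subseteq> {s,s'}" using assms(4) x by auto
    ultimately have "length x \<le> length (p@r)" using M1 by blast
    then show False using x by simp
  qed
  have hd: "x \<noteq> [] \<longrightarrow> hd x = s'"
  proof
    assume "x \<noteq> []" then obtain a t where x: "x = a # t" by (cases x) auto
    have "a \<noteq> s"
    proof
      assume "a = s"
      have "word_act C l t = word_act C l (s # x)" using x \<open>a = s\<close> wa_cancel2[of s "[]" t] assms(1) by simp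
      moreover have "set t \<subseteq> {s,s'}" using x assms(4) by auto
      ultimately show False using M2 x by fastforce
    qed
    then show "hd x = s'" using x assms(4) by auto
  qed
  have xa: "x = altL s' s (length x)" using adj_alt[of x s' s] assms(4) adj hd by auto
  define k where "k = length x"
  have xk: "x = altL s' s k" using xa k_def by simp
  have c: "C s s' = 0 \<or> C s s' = -1 \<or> C s s' \<le> -2" using offd[OF assms(1,2,3)] by linarith
  have a0: "word_act C l (altL s' s 0) (alpha s) = comb s s' 1 0" by (simp add: wa_Nil alpha_comb[of s s'])
  have a1: "word_act C l (altL s' s 1) (alpha s) = comb s s' 1 (- C s s')"
    using assms by (simp add: wa_Cons wa_Nil alpha_comb[of s s'] refl_comb_s')
  have a2: "word_act C l (altL s' s 2) (alpha s) = comb s s' (-1 - C s s' * (- C s s')) (- C s s')"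
  proof -
    have "word_act C l (altL s' s 2) (alpha s) = refl C l s (refl C l s' (comb s s' 1 0))"
      by (simp add: numeral_2_eq_2 wa_Cons wa_Nil alpha_comb[of s s'])
    also have "\<dots> = refl C l s (comb s s' 1 (- C s s'))" using refl_comb_s'[OF assms(1,2,3)] by simp
    also have "\<dots> = comb s s' (-1 - C s s' * (- C s s')) (- C s s')" using refl_comb_s[OF assms(1,2,3)] by simp
    finally show ?thesis .
  qed
  from c show ?thesis
  proof (elim disjE)
    assume c0: "C s s' = 0"
    have "k \<le> 1"
    proof (rule ccontr)
      assume "\<not> k \<le> 1"
      define k' where "k' = k - 2"
      have kk: "k = Suc (Suc k')" using \<open>\<not> k \<le> 1\<close> k'_def by simp
      define t where "t = altL s' s k'"
      have x2: "x = s' # s # t" using xk kk t_def by simp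
      have "word_act C l (s' # t) = word_act C l (s # x)"
      proof
        fix \<mu>
        show "word_act C l (s' # t) \<mu> = word_act C l (s # x) \<mu>"
          using x2 commute_refl[OF assms(1,2) c0, of "refl C l s \<mu>"] assms(1)
          by (simp add: wa_Cons refl_invol)
      qed
      moreover have "set (s' # t) \<subseteq> {s,s'}" using set_altL[of s' s k'] t_def by auto
      ultimately have "length x \<le> length (s' # t)" using M2 by blast
      then show False using x2 by simp
    qed
    then have "k = 0 \<or> k = 1" by auto
    then show ?thesis
    proof (elim disjE)
      assume "k = 0" then have "word_act C l x (alpha s) = comb s s' 1 0" using a0 xk by simp
      then show ?thesis by (intro exI[of _ 1] exI[of _ 0]) simp
    next
      assume "k = 1" then have "word_act C l x (alpha s) = comb s s' 1 0" using a1 xk c0 by simp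
      then show ?thesis by (intro exI[of _ 1] exI[of _ 0]) simp
    qed
  next
    assume c1: "C s s' = -1"
    have "k \<le> 2"
    proof (rule ccontr)
      assume "\<not> k \<le> 2"
      define k' where "k' = k - 3"
      have kk: "k = Suc (Suc (Suc k'))" using \<open>\<not> k \<le> 2\<close> k'_def by simp
      have x2: "x = s' # s # s' # altL s s' k'" using xk kk by simp
      have "word_act C l (s' # s # altL s s' k') = word_act C l (s # x)"
      proof
        fix \<mu>
        show "word_act C l (s' # s # altL s s' k') \<mu> = word_act C l (s # x) \<mu>"
          using x2 braid_refl[OF assms(1,2) c1, of "refl C l s \<mu>"] assms(1)
          by (simp add: wa_Cons refl_invol)
      qed
      moreover have "set (s' # s # altL s s' k') \<subseteq> {s,s'}" using set_altL[of s s' k'] by auto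
      ultimately have "length x \<le> length (s' # s # altL s s' k')" using M2 by blast
      then show False using x2 by simp
    qed
    then have "k = 0 \<or> k = 1 \<or> k = 2" by auto
    then show ?thesis
    proof (elim disjE)
      assume "k = 0" then have "word_act C l x (alpha s) = comb s s' 1 0" using a0 xk by simp
      then show ?thesis by (intro exI[of _ 1] exI[of _ 0]) simp
    next
      assume "k = 1" then have "word_act C l x (alpha s) = comb s s' 1 1" using a1 xk c1 by simp
      then show ?thesis by (intro exI[of _ 1] exI[of _ 1]) simp
    next
      assume "k = 2" then have "word_act C l x (alpha s) = comb s s' 0 1" using a2 xk c1 by simp
      then show ?thesis by (intro exI[of _ 0] exI[of _ 1]) simp
    qed
  next
    assume c2: "C s s' \<le> -2"
    have "\<exists>p' q'. 0 \<le> p' \<and> 0 \<le> q' \<and> word_act C l (altL s' s k) (comb s s' 1 0) = comb s s' p' q'"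
      using alt_pos[OF assms(1,2,3) c2, of 0 1 k] by simp
    then show ?thesis using xk alpha_comb[of s s'] by simp
  qed
qed


lemma Hprime_aux: "\<forall>ws s. set ws \<subseteq> {0..l} \<longrightarrow> len (word_act C l ws) = n \<longrightarrow> s \<le> l \<longrightarrow>
   len (word_act C l ws) \<le> len (word_act C l (s # ws)) \<longrightarrow> nonneg (word_act C l ws (alpha s))"
proof (induction n rule: less_induct)
  case (less n)
  show ?case
  proof (intro allI impI)
    fix ws s assume ws: "set ws \<subseteq> {0..l}" and n: "len (word_act C l ws) = n" and s: "s \<le> l"
      and hs: "len (word_act C l ws) \<le> len (word_act C l (s # ws))"
    obtain ms where ms: "set ms \<subseteq> {0..l}" "length ms = n" "word_act C l ms = word_act C l ws"
      using len_ex[OF ws] n by blast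
    show "nonneg (word_act C l ws (alpha s))"
    proof (cases ms)
      case Nil then have "word_act C l ws = id" using ms wa_Nil by simp
      then show ?thesis by (simp add: nonneg_def alpha_def)
    next
      case (Cons s' rest)
      have s': "s' \<le> l" and rest: "set rest \<subseteq> {0..l}" using ms Cons by auto
      have lr1: "len (word_act C l rest) \<le> n - 1" using len_le[OF rest] ms Cons by simp
      have lr2: "n \<le> len (word_act C l rest) + 1"
      proof -
        have "n = len (word_act C l ([s'] @ rest))" using n ms Cons by simp
        also have "\<dots> \<le> len (word_act C l [s']) + len (word_act C l rest)" using len_sub[of "[s']" rest] s' rest by simp
        finally show ?thesis using len_le[of "[s']"] s' by simp
      qed
      have npos: "n \<ge> 1" using ms Cons by simp
      have ss': "s \<noteq> s'"
      proof
        assume "s = s'"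
        have "word_act C l (s # ws) = word_act C l (s # ms)" using ms by (simp add: wa_Cons_fun)
        also have "\<dots> = word_act C l rest" using Cons \<open>s = s'\<close> wa_cancel2[of s "[]" rest] s by simp
        finally have "len (word_act C l (s # ws)) \<le> n - 1" using lr1 by simp
        then show False using hs n npos by simp
      qed
      define P where "P = (\<lambda>(vs, x). set vs \<subseteq> {0..l} \<and> set x \<subseteq> {s,s'} \<and> word_act C l (x @ vs) = word_act C l ws
            \<and> len (word_act C l vs) + length x = n)"
      have P0: "P (rest, [s'])" using rest ms Cons lr1 lr2 npos unfolding P_def by auto
      obtain vx where Pvx: "P vx" and minvx: "\<forall>y. P y \<longrightarrow> len (word_act C l (fst vx)) \<le> len (word_act C l (fst y))"
        using ex_has_least_nat[of P "(rest,[s'])" "\<lambda>p. len (word_act C l (fst p))"] P0 by blast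
      obtain vs x where vx: "vx = (vs, x)" by fastforce
      have vs: "set vs \<subseteq> {0..l}" and xs: "set x \<subseteq> {s,s'}" and eqw: "word_act C l (x @ vs) = word_act C l ws"
        and ln: "len (word_act C l vs) + length x = n" using Pvx vx unfolding P_def by auto
      have x0: "set x \<subseteq> {0..l}" using xs s s' by auto
      have lvs: "len (word_act C l vs) < n" using minvx P0 vx lr1 npos by fastforce
      have lenx: "len (word_act C l x) = length x"
      proof -
        have "n \<le> len (word_act C l x) + len (word_act C l vs)" using len_sub[OF x0 vs] eqw n by simp
        then show ?thesis using len_le[OF x0] ln by simp
      qed
      have nn: "len (word_act C l vs) \<le> len (word_act C l (t # vs))" if t: "t \<in> {s,s'}" for t
      proof (rule ccontr)
        assume lt: "\<not> len (word_act C l vs) \<le> len (word_act C l (t # vs))"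
        have t0: "t \<le> l" using t s s' by auto
        have e1: "word_act C l ((x @ [t]) @ (t # vs)) = word_act C l ws"
          using wa_cancel2[OF t0, of x vs] eqw by simp
        have "n \<le> len (word_act C l (x @ [t])) + len (word_act C l (t # vs))"
          using len_sub[of "x @ [t]" "t # vs"] e1 n x0 vs t0 by simp
        moreover have "len (word_act C l (x @ [t])) \<le> length x + 1" using len_le[of "x @ [t]"] x0 t0 by simp
        ultimately have "P (t # vs, x @ [t])" unfolding P_def using vs xs t t0 e1 lt ln by auto
        then show False using minvx vx lt by fastforce
      qed
      have ihs: "nonneg (word_act C l vs (alpha s))"
        using less.IH[rule_format, OF lvs vs refl s] nn[of s] by simp
      have ihs': "nonneg (word_act C l vs (alpha s'))"
        using less.IH[rule_format, OF lvs vs refl s'] nn[of s'] by simp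
      have M1: "length x \<le> length y" if "set y \<subseteq> {s,s'}" "word_act C l y = word_act C l x" for y
      proof -
        have "set y \<subseteq> {0..l}" using that s s' by auto
        then show ?thesis using len_le[of y] that lenx by simp
      qed
      have M2: "length x \<le> length y" if y: "set y \<subseteq> {s,s'}" "word_act C l y = word_act C l (s # x)" for y
      proof -
        have y0: "set y \<subseteq> {0..l}" using y s s' by auto
        have "word_act C l (s # ws) = word_act C l (y @ vs)"
          using eqw y(2) by (simp add: wa_Cons_fun wa_append) (metis comp_assoc)
        then have "n \<le> len (word_act C l (y @ vs))" using hs n by simp
        also have "\<dots> \<le> len (word_act C l y) + len (word_act C l vs)" using len_sub[OF y0 vs] .
        also have "\<dots> \<le> length y + len (word_act C l vs)" using len_le[OF y0] by simp
        finally show ?thesis using ln by simp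
      qed
      obtain p q where pq: "0 \<le> p" "0 \<le> q" "word_act C l x (alpha s) = comb s s' p q"
        using dihedral[OF s s' ss' xs M1 M2] by blast
      have "word_act C l ws (alpha s) = word_act C l vs (word_act C l x (alpha s))"
        using eqw[symmetric] by (simp add: wa_append)
      also have "\<dots> = (\<lambda>z. p * word_act C l vs (alpha s) z + q * word_act C l vs (alpha s') z)"
        using pq(3) by (simp add: comb_def wa_comb)
      finally show ?thesis using ihs ihs' pq by (simp add: nonneg_def)
    qed
  qed
qed

lemma Hprime: "set ws \<subseteq> {0..l} \<Longrightarrow> s \<le> l \<Longrightarrow> len (word_act C l ws) \<le> len (word_act C l (s # ws))
   \<Longrightarrow> nonneg (word_act C l ws (alpha s))"
  using Hprime_aux by blast


lemma step_down: assumes us: "set us \<subseteq> {0..l}" and j: "j \<le> l"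
  and neg: "pair C l (word_act C l us Lambda0) j < 0"
  shows "len (word_act C l (us @ [j])) < len (word_act C l us)"
proof -
  have r: "set (rev us) \<subseteq> {0..l}" using us by simp
  have "\<not> nonneg (word_act C l (rev us) (alpha j))"
  proof
    assume "nonneg (word_act C l (rev us) (alpha j))"
    then have "0 \<le> word_act C l (rev us) (alpha j) (Alpha 0)" by (simp add: nonneg_def)
    then show False using pair_transfer[OF us j] neg by simp
  qed
  then have "\<not> len (word_act C l (rev us)) \<le> len (word_act C l (j # rev us))"
    using Hprime[OF r j] by blast
  moreover have "len (word_act C l (j # rev us)) = len (word_act C l (us @ [j]))"
    using len_rev[of "us @ [j]"] us j by simp
  ultimately show ?thesis using len_rev[OF us] by simp
qed

lemma step_up: assumes us: "set us \<subseteq> {0..l}" and j: "j \<le> l"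
  and pos: "pair C l (word_act C l us Lambda0) j > 0"
  shows "len (word_act C l us) < len (word_act C l (us @ [j]))"
proof (rule ccontr)
  assume "\<not> ?thesis"
  moreover have "len (word_act C l (j # rev us)) = len (word_act C l (us @ [j]))"
    using len_rev[of "us @ [j]"] us j by simp
  ultimately have h: "len (word_act C l (j # rev us)) \<le> len (word_act C l (rev us))"
    using len_rev[OF us] by simp
  have v': "set (j # rev us) \<subseteq> {0..l}" using us j by auto
  have "word_act C l (j # j # rev us) = word_act C l (rev us)"
    using wa_cancel2[OF j, of "[]" "rev us"] by simp
  then have "nonneg (word_act C l (j # rev us) (alpha j))"
    using Hprime[OF v' j] h by simp
  moreover have "word_act C l (j # rev us) (alpha j) = (\<lambda>z. (-1) * word_act C l (rev us) (alpha j) z + 0 * word_act C l (rev us) (alpha j) z)"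
  proof -
    have "word_act C l (j # rev us) (alpha j) = word_act C l (rev us) (\<lambda>z. (-1) * alpha j z + 0 * alpha j z)"
      using refl_alpha_self[OF j] by (simp add: wa_Cons)
    then show ?thesis by (simp only: wa_comb)
  qed
  ultimately have "nonneg (\<lambda>z. (-1) * word_act C l (rev us) (alpha j) z + 0 * word_act C l (rev us) (alpha j) z)"
    by simp
  then have "0 \<le> (-1) * word_act C l (rev us) (alpha j) (Alpha 0) + 0 * word_act C l (rev us) (alpha j) (Alpha 0)"
    unfolding nonneg_def by blast
  then have "word_act C l (rev us) (alpha j) (Alpha 0) \<le> 0" by simp
  then show False using pair_transfer[OF us j] pos by simp
qed

definition minpath :: "nat list \<Rightarrow> bool" where
  "minpath ws \<longleftrightarrow> set ws \<subseteq> {0..l} \<and> (\<forall>k<length ws. pair C l (word_act C l (take k ws) Lambda0) (ws ! k) = 1)"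

lemma minpath_snoc: "minpath (ws @ [j]) \<longleftrightarrow> minpath ws \<and> j \<le> l \<and> pair C l (word_act C l ws Lambda0) j = 1"
  unfolding minpath_def
  by (auto simp: nth_append less_Suc_eq)

lemma minpath_len: "minpath ws \<Longrightarrow> len (word_act C l ws) = length ws"
proof (induction ws rule: rev_induct)
  case Nil
  then show ?case using len_le[of "[]"] by simp
next
  case (snoc j ws)
  then have m: "minpath ws" and j: "j \<le> l" and p: "pair C l (word_act C l ws Lambda0) j = 1"
    using minpath_snoc by auto
  have ws: "set ws \<subseteq> {0..l}" using m minpath_def by auto
  have "len (word_act C l ws) < len (word_act C l (ws @ [j]))" using step_up[OF ws j] p by simp
  moreover have "len (word_act C l (ws @ [j])) \<le> length (ws @ [j])" using len_le[of "ws @ [j]"] ws j by simp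
  ultimately show ?case using snoc.IH[OF m] by simp
qed

lemma minpath_reduced: "minpath ws \<Longrightarrow> reduced_word C l ws"
  unfolding reduced_word_def
proof (intro conjI allI impI)
  assume m: "minpath ws"
  then show "set ws \<subseteq> {0..l}" by (simp add: minpath_def)
  fix vs assume "set vs \<subseteq> {0..l} \<and> word_act C l vs = word_act C l ws"
  then show "length ws \<le> length vs" using len_le[of vs] minpath_len[OF m] by simp
qed

definition ht :: "weight \<Rightarrow> int" where
  "ht \<mu> = (\<Sum>k\<le>l. \<mu> (Alpha k))"

lemma ht_refl: "j \<le> l \<Longrightarrow> ht (refl C l j \<mu>) = ht \<mu> - pair C l \<mu> j"
  unfolding ht_def refl_apply using sum_ind'[of j "\<lambda>_. pair C l \<mu> j"]
  by (simp add: sum_subtractf alpha_def)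

lemma minpath_ht: "minpath ws \<Longrightarrow> ht (word_act C l ws Lambda0) = - int (length ws)"
proof (induction ws rule: rev_induct)
  case Nil then show ?case by (simp add: wa_Nil ht_def Lambda0_def)
next
  case (snoc j ws)
  then have m: "minpath ws" and j: "j \<le> l" and p: "pair C l (word_act C l ws Lambda0) j = 1"
    using minpath_snoc by auto
  show ?case using snoc.IH[OF m] ht_refl[OF j] p by (simp add: wa_snoc)
qed

lemma minpath_unique: "minpath ws \<Longrightarrow> set us \<subseteq> {0..l} \<Longrightarrow> word_act C l us Lambda0 = word_act C l ws Lambda0
   \<Longrightarrow> len (word_act C l us) \<le> length ws \<Longrightarrow> word_act C l us = word_act C l ws"
proof (induction ws arbitrary: us rule: rev_induct)
  case Nil
  then obtain vs where "set vs \<subseteq> {0..l}" "length vs = 0" "word_act C l vs = word_act C l us"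
    using len_ex[of us] by fastforce
  then show ?case by simp
next
  case (snoc j ws)
  then have m: "minpath ws" and j: "j \<le> l" and p: "pair C l (word_act C l ws Lambda0) j = 1"
    using minpath_snoc by auto
  have us: "set us \<subseteq> {0..l}" by fact
  have p2: "pair C l (word_act C l us Lambda0) j = -1"
    using snoc.prems(3) pair_refl[OF j, of "word_act C l ws Lambda0" j] p diag[OF j] by (simp add: wa_snoc)
  have "len (word_act C l (us @ [j])) < len (word_act C l us)" using step_down[OF us j] p2 by simp
  then have l1: "len (word_act C l (us @ [j])) \<le> length ws" using snoc.prems(4) by simp
  have e1: "word_act C l (us @ [j]) Lambda0 = word_act C l ws Lambda0"
    using snoc.prems(3) by (simp add: wa_snoc refl_invol[OF j])
  have "word_act C l (us @ [j]) = word_act C l ws"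
    using snoc.IH[OF m _ e1 l1] us j by simp
  then have "word_act C l ((us @ [j]) @ [j]) = word_act C l (ws @ [j])"
    by (simp only: wa_append)
  moreover have "word_act C l ((us @ [j]) @ [j]) = word_act C l us"
    using wa_cancel2[OF j, of us "[]"] by simp
  ultimately show ?case by simp
qed


lemma pair_add: "pair C l (\<lambda>b. \<mu> b + \<nu> b) i = pair C l \<mu> i + pair C l \<nu> i"
  using pair_comb[of 1 \<mu> 1 \<nu> i] by simp

lemma pair_diff: "pair C l (\<lambda>b. \<mu> b - \<nu> b) i = pair C l \<mu> i - pair C l \<nu> i"
  using pair_comb[of 1 \<mu> "-1" \<nu> i] by simp

lemma BB_exp: "BB \<mu> \<gamma> = (\<Sum>k\<le>l. \<Sum>m\<le>l. \<gamma> (Alpha k) * C k m * \<mu> (Alpha m)) + \<gamma> (Alpha 0) * \<mu> Lam0 + \<gamma> Lam0 * \<mu> (Alpha 0)"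
proof -
  have "BB \<mu> \<gamma> = (\<Sum>k\<le>l. (\<Sum>m\<le>l. \<gamma> (Alpha k) * C k m * \<mu> (Alpha m)) + (\<gamma> (Alpha k) * \<mu> Lam0) * (if k = 0 then 1 else 0)) + \<gamma> Lam0 * \<mu> (Alpha 0)"
    unfolding BB_def pair_def by (auto intro!: sum.cong simp: algebra_simps sum_distrib_left)
  also have "\<dots> = (\<Sum>k\<le>l. \<Sum>m\<le>l. \<gamma> (Alpha k) * C k m * \<mu> (Alpha m)) + \<gamma> (Alpha 0) * \<mu> Lam0 + \<gamma> Lam0 * \<mu> (Alpha 0)"
    by (simp only: sum.distrib sum_ind'[of 0, simplified])
  finally show ?thesis .
qed

lemma BB_sym: "BB \<mu> \<gamma> = BB \<gamma> \<mu>"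
proof -
  have "(\<Sum>k\<le>l. \<Sum>m\<le>l. \<gamma> (Alpha k) * C k m * \<mu> (Alpha m)) = (\<Sum>m\<le>l. \<Sum>k\<le>l. \<mu> (Alpha m) * C m k * \<gamma> (Alpha k))"
    by (subst sum.swap) (auto intro!: sum.cong simp: symm)
  then show ?thesis unfolding BB_exp by simp
qed

lemma BB_comb2: "BB \<mu> (\<lambda>b. x * \<gamma> b + y * \<gamma>' b) = x * BB \<mu> \<gamma> + y * BB \<mu> \<gamma>'"
  unfolding BB_def by (simp add: algebra_simps sum.distrib sum_distrib_left)

lemma BB_comb1: "BB (\<lambda>b. x * \<gamma> b + y * \<gamma>' b) \<mu> = x * BB \<gamma> \<mu> + y * BB \<gamma>' \<mu>"
  using BB_comb2 BB_sym by metis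

lemma BB_wa_self: "set ws \<subseteq> {0..l} \<Longrightarrow> BB (word_act C l ws \<mu>) (word_act C l ws \<mu>) = BB \<mu> \<mu>"
  using BB_wa wa_rev_cancel by metis


lemma qform_identity:
  fixes a y :: "nat \<Rightarrow> real"
  assumes apos: "\<And>k. k \<le> l \<Longrightarrow> a k > 0"
    and anull: "\<And>k. k \<le> l \<Longrightarrow> (\<Sum>m\<le>l. real_of_int (C k m) * a m) = 0"
  shows "(\<Sum>k\<le>l. \<Sum>m\<le>l. real_of_int (C k m) * a k * a m * (y k / a k - y m / a m)^2)
       = -2 * (\<Sum>k\<le>l. \<Sum>m\<le>l. real_of_int (C k m) * y k * y m)"
proof -
  have pt: "real_of_int (C k m) * a k * a m * (y k / a k - y m / a m)^2 =
     (y k^2 / a k) * (real_of_int (C k m) * a m) - 2 * (real_of_int (C k m) * y k * y m) + (y m^2 / a m) * (real_of_int (C k m) * a k)"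
    if "k \<le> l" "m \<le> l" for k m
    using apos[OF that(1)] apos[OF that(2)] by (simp add: field_simps power2_eq_square)
  have t1: "(\<Sum>k\<le>l. \<Sum>m\<le>l. (y k^2 / a k) * (real_of_int (C k m) * a m)) = 0"
  proof -
    have "(\<Sum>k\<le>l. \<Sum>m\<le>l. (y k^2 / a k) * (real_of_int (C k m) * a m)) = (\<Sum>k\<le>l. (y k^2 / a k) * (\<Sum>m\<le>l. real_of_int (C k m) * a m))"
      by (simp only: sum_distrib_left)
    then show ?thesis by (simp add: anull)
  qed
  have t3: "(\<Sum>k\<le>l. \<Sum>m\<le>l. (y m^2 / a m) * (real_of_int (C k m) * a k)) = 0"
  proof -
    have "(\<Sum>k\<le>l. \<Sum>m\<le>l. (y m^2 / a m) * (real_of_int (C k m) * a k)) =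
          (\<Sum>m\<le>l. (y m^2 / a m) * (\<Sum>k\<le>l. real_of_int (C m k) * a k))"
      by (subst sum.swap) (auto intro!: sum.cong simp: sum_distrib_left symm)
    then show ?thesis by (simp add: anull)
  qed
  have "(\<Sum>k\<le>l. \<Sum>m\<le>l. real_of_int (C k m) * a k * a m * (y k / a k - y m / a m)^2)
      = (\<Sum>k\<le>l. \<Sum>m\<le>l. (y k^2 / a k) * (real_of_int (C k m) * a m)) - 2 * (\<Sum>k\<le>l. \<Sum>m\<le>l. real_of_int (C k m) * y k * y m)
        + (\<Sum>k\<le>l. \<Sum>m\<le>l. (y m^2 / a m) * (real_of_int (C k m) * a k))"
  proof -
    have "(\<Sum>k\<le>l. \<Sum>m\<le>l. real_of_int (C k m) * a k * a m * (y k / a k - y m / a m)^2)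
      = (\<Sum>k\<le>l. \<Sum>m\<le>l. (y k^2 / a k) * (real_of_int (C k m) * a m) - 2 * (real_of_int (C k m) * y k * y m) + (y m^2 / a m) * (real_of_int (C k m) * a k))"
      by (intro sum.cong refl) (simp add: pt)
    also have "\<dots> = (\<Sum>k\<le>l. \<Sum>m\<le>l. (y k^2 / a k) * (real_of_int (C k m) * a m)) - (\<Sum>k\<le>l. \<Sum>m\<le>l. 2 * (real_of_int (C k m) * y k * y m))
        + (\<Sum>k\<le>l. \<Sum>m\<le>l. (y m^2 / a m) * (real_of_int (C k m) * a k))"
      by (simp only: sum.distrib sum_subtractf)
    also have "(\<Sum>k\<le>l. \<Sum>m\<le>l. 2 * (real_of_int (C k m) * y k * y m)) = 2 * (\<Sum>k\<le>l. \<Sum>m\<le>l. real_of_int (C k m) * y k * y m)"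
      by (simp only: sum_distrib_left)
    finally show ?thesis .
  qed
  then show ?thesis using t1 t3 by simp
qed

lemma qform_pos:
  fixes a y :: "nat \<Rightarrow> real"
  assumes apos: "\<And>k. k \<le> l \<Longrightarrow> a k > 0"
    and anull: "\<And>k. k \<le> l \<Longrightarrow> (\<Sum>m\<le>l. real_of_int (C k m) * a m) = 0"
    and indec: "indecomposable C {0..l}"
  shows "(\<Sum>k\<le>l. \<Sum>m\<le>l. real_of_int (C k m) * y k * y m) \<ge> 0"
    and "(\<Sum>k\<le>l. \<Sum>m\<le>l. real_of_int (C k m) * y k * y m) = 0 \<Longrightarrow> \<forall>k\<le>l. y k = (y 0 / a 0) * a k"
proof -
  define T where "T k m = real_of_int (C k m) * a k * a m * (y k / a k - y m / a m)^2" for k m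
  have Tle: "T k m \<le> 0" if "k \<le> l" "m \<le> l" for k m
  proof (cases "k = m")
    case True then show ?thesis by (simp add: T_def)
  next
    case False
    have "real_of_int (C k m) \<le> 0" using offd[OF that False] by simp
    moreover have "a k * a m * (y k / a k - y m / a m)^2 \<ge> 0" using apos[OF that(1)] apos[OF that(2)] by simp
    ultimately show ?thesis unfolding T_def by (metis mult.assoc mult_nonpos_nonneg)
  qed
  have id: "(\<Sum>k\<le>l. \<Sum>m\<le>l. T k m) = -2 * (\<Sum>k\<le>l. \<Sum>m\<le>l. real_of_int (C k m) * y k * y m)"
    unfolding T_def by (rule qform_identity[OF apos anull])
  have "(\<Sum>k\<le>l. \<Sum>m\<le>l. T k m) \<le> 0" by (intro sum_nonpos) (simp add: Tle)
  then show "(\<Sum>k\<le>l. \<Sum>m\<le>l. real_of_int (C k m) * y k * y m) \<ge> 0" using id by simp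
  assume Q0: "(\<Sum>k\<le>l. \<Sum>m\<le>l. real_of_int (C k m) * y k * y m) = 0"
  have "(\<Sum>k\<le>l. \<Sum>m\<le>l. - T k m) = - (\<Sum>k\<le>l. \<Sum>m\<le>l. T k m)" by (simp only: sum_negf)
  then have S: "(\<Sum>k\<le>l. \<Sum>m\<le>l. - T k m) = 0" using id Q0 by linarith
  have T0: "T k m = 0" if "k \<le> l" "m \<le> l" for k m
  proof -
    have i1: "- T k m \<le> (\<Sum>m'\<le>l. - T k m')"
      by (rule member_le_sum) (use that Tle in auto)
    have i2: "(\<Sum>m'\<le>l. - T k m') \<le> (\<Sum>k'\<le>l. \<Sum>m'\<le>l. - T k' m')"
      by (rule member_le_sum[where f="\<lambda>k'. \<Sum>m'\<le>l. - T k' m'"]) (use that Tle in \<open>auto intro!: sum_nonneg\<close>)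
    show ?thesis using i1 i2 S Tle[OF that] by linarith
  qed
  define z where "z k = y k / a k" for k
  have zeq: "z k = z m" if "k \<le> l" "m \<le> l" "C k m \<noteq> 0" for k m
  proof -
    have "T k m = real_of_int (C k m) * (a k * a m) * (z k - z m)^2" unfolding T_def z_def by (simp only: mult.assoc)
    then have "real_of_int (C k m) * (a k * a m) * (z k - z m)^2 = 0" using T0[OF that(1,2)] by simp
    moreover have "a k * a m \<noteq> 0" using apos[OF that(1)] apos[OF that(2)] by simp
    ultimately have "(z k - z m)^2 = 0" using that(3) by simp
    then show ?thesis by simp
  qed
  have "\<forall>k\<le>l. z k = z 0"
  proof (rule ccontr)
    assume nt: "\<not> (\<forall>k\<le>l. z k = z 0)"
    define A where "A = {k\<in>{0..l}. z k = z 0}"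
    define B where "B = {k\<in>{0..l}. z k \<noteq> z 0}"
    have f1: "A \<noteq> {}" unfolding A_def by auto
    have f2: "B \<noteq> {}"
    proof -
      obtain k where "k \<le> l" "z k \<noteq> z 0" using nt by auto
      then have "k \<in> B" unfolding B_def by auto
      then show ?thesis by auto
    qed
    have f3: "A \<inter> B = {}" "A \<union> B = {0..l}" unfolding A_def B_def by auto
    have f4: "\<forall>p\<in>A. \<forall>q\<in>B. C p q = 0"
    proof (intro ballI)
      fix p q assume "p \<in> A" "q \<in> B"
      then have "p \<le> l" "q \<le> l" "z p = z 0" "z q \<noteq> z 0" unfolding A_def B_def by auto
      then show "C p q = 0" using zeq[of p q] by auto
    qed
    have "\<exists>A B. A \<noteq> {} \<and> B \<noteq> {} \<and> A \<inter> B = {} \<and> A \<union> B = {0..l} \<and> (\<forall>a\<in>A. \<forall>b\<in>B. C a b = 0)"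
      by (intro exI[of _ A] exI[of _ B] conjI f1 f2 f3(1) f3(2) f4)
    then show False using indec unfolding indecomposable_def by simp
  qed
  then show "\<forall>k\<le>l. y k = (y 0 / a 0) * a k"
  proof (intro allI impI)
    fix k assume "\<forall>k\<le>l. z k = z 0" "k \<le> l"
    then have "z k = z 0" by blast
    then have "y k / a k = y 0 / a 0" unfolding z_def .
    then show "y k = (y 0 / a 0) * a k" using apos[OF \<open>k \<le> l\<close>] by (simp add: field_simps)
  qed
qed


definition emb :: "(nat \<Rightarrow> int) \<Rightarrow> weight" where
  "emb x = (\<lambda>b. case b of Alpha k \<Rightarrow> if k \<in> {1..l} then x k else 0 | Lam0 \<Rightarrow> 0)"

lemma emb_Alpha: "emb x (Alpha k) = (if k \<in> {1..l} then x k else 0)" by (simp add: emb_def)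
lemma emb_Lam0: "emb x Lam0 = 0" by (simp add: emb_def)

lemma sum_restrict1: "(\<Sum>k\<le>l. (if k \<in> {1..l} then f k else (0::int))) = (\<Sum>k\<in>{1..l}. f k)"
proof -
  have "(\<Sum>k\<le>l. (if k \<in> {1..l} then f k else (0::int))) = sum f ({..l} \<inter> {1..l})"
    by (rule sum.inter_restrict[symmetric]) simp
  also have "{..l} \<inter> {1..l} = {1..l}" by auto
  finally show ?thesis .
qed

lemma pair_emb: "pair C l (emb x) j = (\<Sum>k\<in>{1..l}. C j k * x k)"
proof -
  have "pair C l (emb x) j = (\<Sum>k\<le>l. (if k \<in> {1..l} then C j k * x k else 0))"
    unfolding pair_def by (auto intro!: sum.cong simp: emb_Alpha emb_Lam0)
  then show ?thesis by (simp only: sum_restrict1)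
qed

lemma BB_emb: "BB \<mu> (emb x) = (\<Sum>k\<in>{1..l}. x k * pair C l \<mu> k)"
proof -
  have "BB \<mu> (emb x) = (\<Sum>k\<le>l. (if k \<in> {1..l} then x k * pair C l \<mu> k else 0))"
    unfolding BB_def by (auto intro!: sum.cong simp: emb_Alpha emb_Lam0)
  then show ?thesis by (simp only: sum_restrict1)
qed

lemma emb_refl: assumes "j \<in> {1..l}" shows "refl C l j (emb x) = emb (fin_refl C {1..l} j x)"
proof
  fix b show "refl C l j (emb x) b = emb (fin_refl C {1..l} j x) b"
    using assms by (cases b) (auto simp: refl_apply pair_emb emb_Alpha emb_Lam0 fin_refl_def alpha_def)
qed

lemma emb_fold: "set ws \<subseteq> {1..l} \<Longrightarrow> emb (fold (fin_refl C {1..l}) ws v) = word_act C l ws (emb v)"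
proof (induction ws arbitrary: v)
  case Nil then show ?case by (simp add: wa_Nil)
next
  case (Cons a ws) then show ?case by (simp add: wa_Cons emb_refl)
qed

lemma emb_unitv: "m \<in> {1..l} \<Longrightarrow> emb (unitv m) = alpha m"
  by (auto simp: fun_eq_iff emb_def unitv_def alpha_def split: wbasis.split)

lemma fold_supp: "set ws \<subseteq> {1..l} \<Longrightarrow> (\<forall>k. k \<notin> {1..l} \<longrightarrow> v k = 0) \<Longrightarrow>
   (\<forall>k. k \<notin> {1..l} \<longrightarrow> fold (fin_refl C {1..l}) ws v k = 0)"
proof (induction ws arbitrary: v)
  case Nil then show ?case by simp
next
  case (Cons a ws)
  have "\<forall>k. k \<notin> {1..l} \<longrightarrow> fin_refl C {1..l} a v k = 0" using Cons.prems by (auto simp: fin_refl_def)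
  then show ?case using Cons by simp
qed

lemma root_supp: "\<beta> \<in> fin_roots C {1..l} \<Longrightarrow> k \<notin> {1..l} \<Longrightarrow> \<beta> k = 0"
  unfolding fin_roots_def using fold_supp by (auto simp: unitv_def)

lemma fin_roots_iff: "\<beta> \<in> fin_roots C J \<longleftrightarrow> (\<exists>ws m. \<beta> = fold (fin_refl C J) ws (unitv m) \<and> set ws \<subseteq> J \<and> m \<in> J)"
  unfolding fin_roots_def by blast

lemma root_closed: assumes "\<beta> \<in> fin_roots C {1..l}" "j \<in> {1..l}" shows "fin_refl C {1..l} j \<beta> \<in> fin_roots C {1..l}"
proof -
  obtain ws m where h: "\<beta> = fold (fin_refl C {1..l}) ws (unitv m)" "set ws \<subseteq> {1..l}" "m \<in> {1..l}"
    using assms(1) unfolding fin_roots_iff by blast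
  then have "fin_refl C {1..l} j \<beta> = fold (fin_refl C {1..l}) (ws @ [j]) (unitv m)" by simp
  then show ?thesis unfolding fin_roots_iff using h assms(2) by (intro exI[of _ "ws @ [j]"] exI[of _ m]) auto
qed

lemma unitv_root: "m \<in> {1..l} \<Longrightarrow> unitv m \<in> fin_roots C {1..l}"
  unfolding fin_roots_iff by (intro exI[of _ "[]"] exI[of _ m]) auto

lemma root_BB: assumes "\<beta> \<in> fin_roots C {1..l}" shows "BB (emb \<beta>) (emb \<beta>) = 2"
proof -
  obtain ws m where h: "\<beta> = fold (fin_refl C {1..l}) ws (unitv m)" "set ws \<subseteq> {1..l}" "m \<in> {1..l}"
    using assms unfolding fin_roots_def by blast
  then have e: "emb \<beta> = word_act C l ws (alpha m)" using emb_fold[OF h(2)] emb_unitv[OF h(3)] by simp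
  have ws: "set ws \<subseteq> {0..l}" using h by auto
  have "BB (emb \<beta>) (emb \<beta>) = BB (alpha m) (alpha m)" unfolding e by (rule BB_wa_self[OF ws])
  also have "\<dots> = 2" using h(3) by (simp add: BB_alpha pair_alpha diag)
  finally show ?thesis .
qed

end

locale aff = sgcm +
  fixes \<theta> :: "nat \<Rightarrow> int" and a :: "nat \<Rightarrow> real"
  assumes indec: "indecomposable C {0..l}"
    and apos: "\<And>k. k \<le> l \<Longrightarrow> a k > 0"
    and anull: "\<And>k. k \<le> l \<Longrightarrow> (\<Sum>m\<le>l. real_of_int (C k m) * a m) = 0"
    and aff1: "\<exists>u. (\<exists>i\<in>{0..l}. u i \<noteq> 0) \<and> (\<forall>i\<in>{0..l}. mvec C {0..l} u i = 0) \<and>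
          (\<forall>v. (\<forall>i\<in>{0..l}. mvec C {0..l} v i = 0) \<longrightarrow> (\<exists>c. \<forall>i\<in>{0..l}. v i = c * u i))"
    and th_root: "\<theta> \<in> fin_roots C {1..l}"
    and th_max: "\<And>\<beta> j. \<beta> \<in> fin_roots C {1..l} \<Longrightarrow> j \<in> {1..l} \<Longrightarrow> \<beta> j \<le> \<theta> j"
    and th_c: "\<And>j. j \<in> {1..l} \<Longrightarrow> C j 0 = - (\<Sum>k\<in>{1..l}. C j k * \<theta> k)"
begin

lemma emb_qform: "real_of_int (BB (emb x) (emb x)) =
   (\<Sum>k\<le>l. \<Sum>m\<le>l. real_of_int (C k m) * real_of_int (emb x (Alpha k)) * real_of_int (emb x (Alpha m)))"
  unfolding BB_exp by (simp add: emb_Lam0 algebra_simps)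

lemma emb_pos: "BB (emb x) (emb x) \<ge> 0"
proof -
  have "real_of_int (BB (emb x) (emb x)) \<ge> 0"
    unfolding emb_qform by (rule qform_pos(1)[OF apos anull indec])
  then show ?thesis by simp
qed

lemma emb_zero: assumes "BB (emb x) (emb x) = 0" "k \<in> {1..l}" shows "x k = 0"
proof -
  define y where "y m = real_of_int (emb x (Alpha m))" for m
  have "(\<Sum>k\<le>l. \<Sum>m\<le>l. real_of_int (C k m) * y k * y m) = 0"
    using emb_qform[of x] assms(1) unfolding y_def by simp
  then have "\<forall>k\<le>l. y k = (y 0 / a 0) * a k" using qform_pos(2)[OF apos anull indec, of y] by blast
  moreover have "y 0 = 0" unfolding y_def by (simp add: emb_Alpha)
  ultimately have "y k = 0" using assms(2) by auto
  then show ?thesis using assms(2) unfolding y_def by (simp add: emb_Alpha)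
qed


lemma BB_emb_nonneg: "(\<And>k. k \<in> {1..l} \<Longrightarrow> 0 \<le> x k) \<Longrightarrow> (\<And>k. k \<in> {1..l} \<Longrightarrow> 0 \<le> pair C l \<mu> k) \<Longrightarrow> 0 \<le> BB \<mu> (emb x)"
  unfolding BB_emb by (intro sum_nonneg mult_nonneg_nonneg) auto

lemma theta_dom: "k \<in> {1..l} \<Longrightarrow> 0 \<le> pair C l (emb \<theta>) k"
  using th_c[of k] offd[of k 0] by (simp add: pair_emb)

lemma theta_BB: "BB (emb \<theta>) (emb \<theta>) = 2" using root_BB[OF th_root] .

lemma emb_lin: "emb (\<lambda>k. p * x k + q * y k) = (\<lambda>b. p * emb x b + q * emb y b)"
proof
  fix b show "emb (\<lambda>k. p * x k + q * y k) b = p * emb x b + q * emb y b"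
    by (cases b) (auto simp: emb_Alpha emb_Lam0)
qed

lemma root_dom_eq: assumes r: "\<beta> \<in> fin_roots C {1..l}" and nn: "\<And>k. k \<in> {1..l} \<Longrightarrow> 0 \<le> \<beta> k"
  and dom: "\<And>j. j \<in> {1..l} \<Longrightarrow> 0 \<le> pair C l (emb \<beta>) j"
  shows "\<beta> = \<theta>"
proof -
  define d where "d k = 1 * \<theta> k + (-1) * \<beta> k" for k
  have ed: "emb d = (\<lambda>b. 1 * emb \<theta> b + (-1) * emb \<beta> b)" unfolding d_def by (rule emb_lin)
  have dnn: "0 \<le> d k" if "k \<in> {1..l}" for k using th_max[OF r that] unfolding d_def by simp
  have x1: "0 \<le> BB (emb \<theta>) (emb d)" by (rule BB_emb_nonneg) (use dnn theta_dom in auto)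
  have x2: "0 \<le> BB (emb \<beta>) (emb d)" by (rule BB_emb_nonneg) (use dnn dom in auto)
  have e1: "BB (emb \<theta>) (emb d) = BB (emb \<theta>) (emb \<theta>) - BB (emb \<theta>) (emb \<beta>)"
    unfolding ed by (simp only: BB_comb2; simp)
  have e2: "BB (emb \<beta>) (emb d) = BB (emb \<beta>) (emb \<theta>) - BB (emb \<beta>) (emb \<beta>)"
    unfolding ed by (simp only: BB_comb2; simp)
  have s: "BB (emb \<beta>) (emb \<theta>) = BB (emb \<theta>) (emb \<beta>)" by (rule BB_sym)
  have z1: "BB (emb \<theta>) (emb d) = 0" and z2: "BB (emb \<beta>) (emb d) = 0"
    using x1 x2 e1 e2 s theta_BB root_BB[OF r] by linarith+
  have "BB (emb d) (emb d) = BB (emb \<theta>) (emb d) - BB (emb \<beta>) (emb d)"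
    by (subst (1) ed) (simp only: BB_comb1; simp)
  then have "BB (emb d) (emb d) = 0" using z1 z2 by simp
  then have "d k = 0" if "k \<in> {1..l}" for k using emb_zero that by blast
  then have "\<beta> k = \<theta> k" if "k \<in> {1..l}" for k using that unfolding d_def by force
  moreover have "\<beta> k = \<theta> k" if "k \<notin> {1..l}" for k using root_supp[OF r that] root_supp[OF th_root that] by simp
  ultimately show ?thesis by blast
qed

lemma neg_pair: assumes r: "\<beta> \<in> fin_roots C {1..l}" and nn: "\<And>k. k \<in> {1..l} \<Longrightarrow> 0 \<le> \<beta> k"
  and j: "j \<in> {1..l}" and neg: "pair C l (emb \<beta>) j < 0"
  shows "pair C l (emb \<beta>) j = -1"
proof -
  define p where "p = pair C l (emb \<beta>) j"
  define x where "x k = 1 * \<beta> k + 1 * unitv j k" for k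
  have ex: "emb x = (\<lambda>b. 1 * emb \<beta> b + 1 * alpha j b)"
    unfolding x_def emb_lin emb_unitv[OF j] ..
  have jl: "j \<le> l" using j by simp
  have "BB (emb x) (emb x) = BB (emb \<beta>) (emb \<beta>) + BB (emb \<beta>) (alpha j) + BB (alpha j) (emb \<beta>) + BB (alpha j) (alpha j)"
    unfolding ex by (simp only: BB_comb1 BB_comb2; simp)
  also have "\<dots> = 4 + 2 * p"
    using root_BB[OF r] BB_alpha[OF jl, of "emb \<beta>"] BB_sym[of "alpha j" "emb \<beta>"]
      BB_alpha[OF jl, of "alpha j"] pair_alpha[OF jl, of j] diag[OF jl] p_def by simp
  finally have bx: "BB (emb x) (emb x) = 4 + 2 * p" .
  have "p \<noteq> -2"
  proof
    assume "p = -2"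
    then have "BB (emb x) (emb x) = 0" using bx by simp
    then have "x j = 0" using emb_zero j by blast
    then show False using nn[OF j] unfolding x_def unitv_def by simp
  qed
  then show ?thesis using emb_pos[of x] bx neg p_def by simp
qed


definition st :: "(nat \<Rightarrow> int) \<Rightarrow> weight" where
  "st \<gamma> = (\<lambda>b. Lambda0 b - alpha 0 b - emb \<theta> b + emb \<gamma> b)"

lemma pair_st: assumes "j \<in> {1..l}" shows "pair C l (st \<gamma>) j = pair C l (emb \<gamma>) j"
proof -
  have "pair C l (st \<gamma>) j = pair C l Lambda0 j - pair C l (alpha 0) j - pair C l (emb \<theta>) j + pair C l (emb \<gamma>) j"
    unfolding st_def by (simp only: pair_add pair_diff)
  also have "\<dots> = pair C l (emb \<gamma>) j" using assms th_c[OF assms] by (simp add: pair_Lambda0 pair_alpha pair_emb)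
  finally show ?thesis .
qed

lemma refl_st: assumes "j \<in> {1..l}" "pair C l (emb \<gamma>) j = 1"
  shows "refl C l j (st \<gamma>) = st (\<gamma>(j := \<gamma> j - 1))"
proof
  fix b
  have "refl C l j (st \<gamma>) b = st \<gamma> b - alpha j b" using assms pair_st[OF assms(1)] by (simp add: refl_apply)
  also have "\<dots> = st (\<gamma>(j := \<gamma> j - 1)) b"
    using assms(1) by (cases b) (auto simp: st_def emb_Alpha emb_Lam0 alpha_def)
  finally show "refl C l j (st \<gamma>) b = st (\<gamma>(j := \<gamma> j - 1)) b" .
qed

lemma st_theta: "word_act C l [0] Lambda0 = st \<theta>"
  by (auto simp: fun_eq_iff wa_Cons wa_Nil refl_apply pair_Lambda0 st_def)

lemma minpath0: "minpath [0]"
  unfolding minpath_def by (simp add: wa_Nil pair_Lambda0)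

definition M :: "(nat \<Rightarrow> int) \<Rightarrow> int" where
  "M \<beta> = (\<Sum>k\<in>{1..l}. \<theta> k - \<beta> k)"

lemma path_aux: "\<forall>\<beta>. \<beta> \<in> fin_roots C {1..l} \<and> (\<forall>k\<in>{1..l}. 0 \<le> \<beta> k) \<and> nat (M \<beta>) = n \<longrightarrow>
   (\<exists>js. set js \<subseteq> {1..l} \<and> minpath (0 # js) \<and> word_act C l (0 # js) Lambda0 = st \<beta>)"
proof (induction n rule: less_induct)
  case (less n)
  show ?case
  proof (intro allI impI, elim conjE)
    fix \<beta> assume r: "\<beta> \<in> fin_roots C {1..l}" and nn: "\<forall>k\<in>{1..l}. 0 \<le> \<beta> k" and n: "nat (M \<beta>) = n"
    show "\<exists>js. set js \<subseteq> {1..l} \<and> minpath (0 # js) \<and> word_act C l (0 # js) Lambda0 = st \<beta>"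
    proof (cases "\<beta> = \<theta>")
      case True
      then show ?thesis using minpath0 st_theta by (intro exI[of _ "[]"]) auto
    next
      case False
      then have "\<not> (\<forall>j\<in>{1..l}. 0 \<le> pair C l (emb \<beta>) j)" using root_dom_eq[OF r] nn by blast
      then obtain j where j: "j \<in> {1..l}" and neg: "pair C l (emb \<beta>) j < 0" by force
      have p1: "pair C l (emb \<beta>) j = -1" using neg_pair[OF r _ j neg] nn by blast
      define \<beta>' where "\<beta>' = fin_refl C {1..l} j \<beta>"
      have b': "\<beta>' = \<beta>(j := \<beta> j + 1)" using p1 unfolding \<beta>'_def fin_refl_def by (simp add: pair_emb)
      have r': "\<beta>' \<in> fin_roots C {1..l}" unfolding \<beta>'_def using root_closed[OF r j] .
      have nn': "\<forall>k\<in>{1..l}. 0 \<le> \<beta>' k" using nn b' by auto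
      have "M \<beta>' = (\<Sum>k\<in>{1..l}. (\<theta> k - \<beta> k) - (if k = j then 1 else 0))"
        unfolding M_def b' by (intro sum.cong) auto
      also have "\<dots> = M \<beta> - 1" using j unfolding M_def by (simp add: sum_subtractf)
      finally have M1: "M \<beta>' = M \<beta> - 1" .
      have M0: "0 \<le> M \<beta>'" unfolding M_def by (intro sum_nonneg) (use th_max[OF r'] in auto)
      have lt: "nat (M \<beta>') < n" using M1 M0 n by simp
      obtain js' where js': "set js' \<subseteq> {1..l}" "minpath (0 # js')" "word_act C l (0 # js') Lambda0 = st \<beta>'"
        using less.IH[OF lt] r' nn' by blast
      have jl: "j \<le> l" using j by simp
      have "pair C l (emb \<beta>') j = 1"
        using emb_refl[OF j, of \<beta>] pair_refl[OF jl, of "emb \<beta>" j] p1 diag[OF jl] \<beta>'_def by simp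
      then have ps: "pair C l (st \<beta>') j = 1" using pair_st[OF j] by simp
      have mp: "minpath ((0 # js') @ [j])" using minpath_snoc[of "0 # js'" j] js' jl ps by simp
      have "word_act C l ((0 # js') @ [j]) Lambda0 = refl C l j (st \<beta>')" using js' by (simp only: wa_snoc)
      also have "\<dots> = st (\<beta>'(j := \<beta>' j - 1))" using refl_st[OF j] \<open>pair C l (emb \<beta>') j = 1\<close> by simp
      also have "\<beta>'(j := \<beta>' j - 1) = \<beta>" using b' by (simp add: fun_eq_iff)
      finally show ?thesis using mp js' j by (intro exI[of _ "js' @ [j]"]) auto
    qed
  qed
qed

lemma path: "i \<in> {1..l} \<Longrightarrow> \<exists>js. set js \<subseteq> {1..l} \<and> minpath (0 # js) \<and> word_act C l (0 # js) Lambda0 = st (unitv i)"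
  using path_aux unitv_root[of i] by (auto simp: unitv_def)


definition a0 :: "nat \<Rightarrow> int" where
  "a0 k = (if k = 0 then 1 else if k \<le> l then \<theta> k else 0)"

lemma theta_pos: "k \<in> {1..l} \<Longrightarrow> 1 \<le> \<theta> k"
  using th_max[OF unitv_root, of k k] by (simp add: unitv_def)

lemma sum_split0: "(\<Sum>j\<le>l. f j) = f 0 + (\<Sum>j\<in>{1..l}. f (j::nat))"
proof -
  have "{..l} = insert 0 {1..l}" by auto
  then show ?thesis by simp
qed

lemma row_a0: assumes "i \<le> l" shows "(\<Sum>j\<le>l. C i j * a0 j) = 0"
proof -
  have "(\<Sum>j\<le>l. C i j * a0 j) = C i 0 + (\<Sum>j\<in>{1..l}. C i j * \<theta> j)"
    unfolding sum_split0[of "\<lambda>j. C i j * a0 j"] by (auto intro!: sum.cong simp: a0_def)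
  also have "\<dots> = 0"
  proof (cases "i = 0")
    case True
    have "(\<Sum>j\<in>{1..l}. C 0 j * \<theta> j) = (\<Sum>j\<in>{1..l}. \<theta> j * (- pair C l (emb \<theta>) j))"
    proof (intro sum.cong refl)
      fix j assume j: "j \<in> {1..l}"
      have "C 0 j = - pair C l (emb \<theta>) j" using symm[of 0 j] th_c[OF j] j by (simp add: pair_emb)
      then show "C 0 j * \<theta> j = \<theta> j * (- pair C l (emb \<theta>) j)" by simp
    qed
    also have "\<dots> = - BB (emb \<theta>) (emb \<theta>)" by (simp add: BB_emb sum_negf)
    finally show ?thesis using True theta_BB diag[of 0] by simp
  next
    case False then show ?thesis using th_c[of i] assms by simp
  qed
  finally show ?thesis .
qed

lemma null_coeffs_eq: "null_coeffs C l = a0"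
  unfolding null_coeffs_def
proof (rule the_equality)
  show "(\<forall>j\<le>l. 0 < a0 j) \<and> (\<forall>j>l. a0 j = 0) \<and> (\<forall>i\<le>l. (\<Sum>j\<le>l. C i j * a0 j) = 0) \<and> Gcd (a0 ` {..l}) = 1"
  proof (intro conjI allI impI)
    fix j assume "j \<le> l" then show "0 < a0 j" using theta_pos[of j] by (auto simp: a0_def)
  next
    fix j assume "l < j" then show "a0 j = 0" by (simp add: a0_def)
  next
    fix i assume "i \<le> l" then show "(\<Sum>j\<le>l. C i j * a0 j) = 0" by (rule row_a0)
  next
    show "Gcd (a0 ` {..l}) = 1" by (rule Gcd_eq_1_I[of 1]) (auto simp: a0_def image_iff intro!: bexI[of _ 0])
  qed
next
  fix a' assume h: "(\<forall>j\<le>l. 0 < a' j) \<and> (\<forall>j>l. a' j = (0::int)) \<and> (\<forall>i\<le>l. (\<Sum>j\<le>l. C i j * a' j) = 0) \<and> Gcd (a' ` {..l}) = 1"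
  obtain u where u: "\<forall>v. (\<forall>i\<in>{0..l}. mvec C {0..l} v i = 0) \<longrightarrow> (\<exists>c. \<forall>i\<in>{0..l}. v i = c * u i)"
    using aff1 by blast
  have ker: "\<exists>c. \<forall>i\<le>l. real_of_int (b i) = c * u i" if "\<forall>i\<le>l. (\<Sum>j\<le>l. C i j * b j) = 0" for b
  proof -
    have "\<forall>i\<in>{0..l}. mvec C {0..l} (\<lambda>k. real_of_int (b k)) i = 0"
    proof
      fix i assume "i \<in> {0..l}"
      then have "real_of_int (\<Sum>j\<le>l. C i j * b j) = 0" using that by simp
      then show "mvec C {0..l} (\<lambda>k. real_of_int (b k)) i = 0" unfolding mvec_def atLeast0AtMost by simp
    qed
    then have "\<exists>c. \<forall>i\<in>{0..l}. real_of_int (b i) = c * u i" using u by blast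
    then obtain c where "\<forall>i\<in>{0..l}. real_of_int (b i) = c * u i" by blast
    then show ?thesis by auto
  qed
  obtain c1 where c1: "\<forall>i\<le>l. real_of_int (a' i) = c1 * u i" using ker[of a'] h by blast
  obtain c2 where c2: "\<forall>i\<le>l. real_of_int (a0 i) = c2 * u i" using ker[of a0] row_a0 by blast
  have c20: "c2 * u 0 = 1" using c2[rule_format, of 0] by (simp add: a0_def)
  have rel: "real_of_int (a' i) = real_of_int (a' 0) * real_of_int (a0 i)" if "i \<le> l" for i
  proof -
    have "real_of_int (a' i) = c1 * u i" using c1 that by simp
    also have "\<dots> = (c1 * u i) * (c2 * u 0)" using c20 by simp
    also have "\<dots> = (c1 * u 0) * (c2 * u i)" by (simp add: algebra_simps)
    also have "\<dots> = real_of_int (a' 0) * real_of_int (a0 i)" using c1 c2 that by simp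
    finally show ?thesis .
  qed
  have rel': "a' i = a' 0 * a0 i" if "i \<le> l" for i using rel[OF that] by (simp only: of_int_mult[symmetric] of_int_eq_iff)
  have "a' 0 dvd Gcd (a' ` {..l})"
  proof (rule Gcd_greatest)
    fix b assume "b \<in> a' ` {..l}"
    then obtain i where "i \<le> l" "b = a' i" by auto
    then show "a' 0 dvd b" using rel'[of i] by (metis dvd_triv_left)
  qed
  then have "a' 0 dvd 1" using h by simp
  then have ab: "\<bar>a' 0\<bar> = 1" by simp
  have "0 < a' 0" using h by simp
  then have a1: "a' 0 = 1" using ab by simp
  show "a' = a0"
  proof
    fix k show "a' k = a0 k"
    proof (cases "k \<le> l")
      case True
      have "a' k = a' 0 * a0 k" by (rule rel'[OF True])
      then show ?thesis using a1 by simp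
    next
      case False then have "a' k = 0" using h by simp
      then show ?thesis using False by (simp add: a0_def)
    qed
  qed
qed

lemma delta_eq: "delta C l = (\<lambda>b. alpha 0 b + emb \<theta> b)"
proof
  fix b show "delta C l b = alpha 0 b + emb \<theta> b"
    by (cases b) (auto simp: delta_def null_coeffs_eq a0_def alpha_def emb_Alpha emb_Lam0)
qed


lemma final_aff: assumes i: "i \<in> {1..l}"
  shows "\<exists>!w. w \<in> weyl_group C l \<and> minuscule C l Lambda0 w \<and>
           w Lambda0 = (\<lambda>b. Lambda0 b - delta C l b + alpha i b)"
proof -
  obtain js where js: "set js \<subseteq> {1..l}" "minpath (0 # js)" "word_act C l (0 # js) Lambda0 = st (unitv i)"
    using path[OF i] by blast
  have tgt: "st (unitv i) = (\<lambda>b. Lambda0 b - delta C l b + alpha i b)"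
    unfolding st_def delta_eq emb_unitv[OF i] by (simp add: fun_eq_iff)
  have ws0: "set (0 # js) \<subseteq> {0..l}" using js(1) by auto
  have ex: "word_act C l (0 # js) \<in> weyl_group C l \<and> minuscule C l Lambda0 (word_act C l (0 # js)) \<and>
           word_act C l (0 # js) Lambda0 = (\<lambda>b. Lambda0 b - delta C l b + alpha i b)"
  proof (intro conjI)
    show "word_act C l (0 # js) \<in> weyl_group C l" unfolding weyl_group_def using ws0 by blast
    show "minuscule C l Lambda0 (word_act C l (0 # js))"
      unfolding minuscule_def using minpath_reduced[OF js(2)] js(2) unfolding minpath_def by blast
    show "word_act C l (0 # js) Lambda0 = (\<lambda>b. Lambda0 b - delta C l b + alpha i b)" using js(3) tgt by simp
  qed
  show ?thesis
  proof (rule ex1I[of _ "word_act C l (0 # js)"])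
    show "word_act C l (0 # js) \<in> weyl_group C l \<and> minuscule C l Lambda0 (word_act C l (0 # js)) \<and>
           word_act C l (0 # js) Lambda0 = (\<lambda>b. Lambda0 b - delta C l b + alpha i b)" using ex .
  next
    fix w assume h: "w \<in> weyl_group C l \<and> minuscule C l Lambda0 w \<and> w Lambda0 = (\<lambda>b. Lambda0 b - delta C l b + alpha i b)"
    then obtain ws where ws: "reduced_word C l ws" "w = word_act C l ws"
      "\<forall>k<length ws. pair C l (word_act C l (take k ws) Lambda0) (ws ! k) = 1"
      unfolding minuscule_def by blast
    have mp: "minpath ws" unfolding minpath_def using ws reduced_word_def by blast
    have eqi: "word_act C l ws Lambda0 = word_act C l (0 # js) Lambda0" using h ws(2) ex by simp
    have "int (length ws) = int (length (0 # js))"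
      using minpath_ht[OF mp] minpath_ht[OF js(2)] eqi by simp
    then have "len (word_act C l ws) \<le> length (0 # js)" using minpath_len[OF mp] by simp
    then have "word_act C l ws = word_act C l (0 # js)"
      using minpath_unique[OF js(2) _ eqi] mp unfolding minpath_def by blast
    then show "w = word_act C l (0 # js)" using ws(2) by simp
  qed
qed

end

theorem lemma5p22:
  fixes C :: cmat and l i :: nat
  assumes "untwisted_affine C l"
    and "\<forall>a\<le>l. \<forall>b\<le>l. C a b = C b a"
    and "i \<in> {1..l}"
  shows "\<exists>!w. w \<in> weyl_group C l \<and> minuscule C l Lambda0 w \<and>
           w Lambda0 = (\<lambda>b. Lambda0 b - delta C l b + alpha i b)"
proof -
  have ua: "l \<ge> 1" "gcm C {0..l}" "affine_type C {0..l}" "indecomposable C {0..l}"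
    using assms(1) unfolding untwisted_affine_def by auto
  obtain ws m where wm: "set ws \<subseteq> {1..l}" "m \<in> {1..l}"
    "\<forall>\<beta>\<in>fin_roots C {1..l}. \<forall>j\<in>{1..l}. \<beta> j \<le> fold (fin_refl C {1..l}) ws (unitv m) j"
    "\<forall>j\<in>{1..l}. C j 0 = - (\<Sum>k\<in>{1..l}. C j k * fold (fin_refl C {1..l}) ws (unitv m) k)"
    using assms(1) unfolding untwisted_affine_def Let_def by blast
  define \<theta> where "\<theta> = fold (fin_refl C {1..l}) ws (unitv m)"
  obtain u where u: "\<forall>i\<in>{0..l}. u i > 0" "\<forall>i\<in>{0..l}. mvec C {0..l} u i = 0"
    using ua(3) unfolding affine_type_def by blast
  have aff1: "\<exists>u. (\<exists>i\<in>{0..l}. u i \<noteq> 0) \<and> (\<forall>i\<in>{0..l}. mvec C {0..l} u i = 0) \<and>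
          (\<forall>v. (\<forall>i\<in>{0..l}. mvec C {0..l} v i = 0) \<longrightarrow> (\<exists>c. \<forall>i\<in>{0..l}. v i = c * u i))"
    using ua(3) unfolding affine_type_def by blast
  interpret sgcm C l
  proof
    fix i j assume "i \<le> l" then show "C i i = 2" using ua(2) unfolding gcm_def by auto
  next
    fix i j assume "i \<le> l" "j \<le> l" "i \<noteq> j" then show "C i j \<le> 0" using ua(2) unfolding gcm_def by auto
  next
    fix i j assume "i \<le> l" "j \<le> l" then show "C i j = C j i" using assms(2) by auto
  qed
  interpret aff C l \<theta> u
  proof
    show "indecomposable C {0..l}" by (rule ua(4))
  next
    fix k assume "k \<le> l" then show "u k > 0" using u(1) by auto
  next
    fix k assume "k \<le> l"
    then have "mvec C {0..l} u k = 0" using u(2) by auto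
    then show "(\<Sum>m\<le>l. real_of_int (C k m) * u m) = 0" unfolding mvec_def atLeast0AtMost .
  next
    show "\<exists>u. (\<exists>i\<in>{0..l}. u i \<noteq> 0) \<and> (\<forall>i\<in>{0..l}. mvec C {0..l} u i = 0) \<and>
          (\<forall>v. (\<forall>i\<in>{0..l}. mvec C {0..l} v i = 0) \<longrightarrow> (\<exists>c. \<forall>i\<in>{0..l}. v i = c * u i))" by (rule aff1)
  next
    show "\<theta> \<in> fin_roots C {1..l}" unfolding fin_roots_iff \<theta>_def using wm by blast
  next
    fix \<beta> j assume "\<beta> \<in> fin_roots C {1..l}" "j \<in> {1..l}" then show "\<beta> j \<le> \<theta> j" using wm(3) \<theta>_def by blast
  next
    fix j assume "j \<in> {1..l}" then show "C j 0 = - (\<Sum>k\<in>{1..l}. C j k * \<theta> k)" using wm(4) \<theta>_def by blast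
  qed
  show ?thesis by (rule final_aff[OF assms(3)])
qed

end
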